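(* Let $\rho_\mathcal{A}$ be an antisymmetric state on $\mathbb{C}^d\otimes\mathbb{C}^d$ and let $p^\textrm{PPT}(\rho_\mathcal{A})$ be the optimal value of the semidefinite program: maximize $\operatorname{Tr}(P_\mathcal{A}\sigma)$ over $\sigma$ subject to $P_\mathcal{A}\sigma P_\mathcal{A} = \operatorname{Tr}(P_\mathcal{A}\sigma)\rho_\mathcal{A}$, $\sigma\geq 0$, $\operatorname{Tr}(\sigma)=1$, $\sigma^\Gamma\geq 0$. If $p^\textrm{PPT}(\rho_\mathcal{A})<1/2$, then any optimal state $\sigma^*$ of this program (a PPT state with $P_\mathcal{A}\sigma^*P_\mathcal{A}=p^\textrm{PPT}(\rho_\mathcal{A})\rho_\mathcal{A}$) is entangled, hence PPT entangled.
   Context: $V$ is the swap operator on $\mathbb{C}^d\otimes\mathbb{C}^d$, $P_\mathcal{A}=(\mathbb{1}-V)/2$ is the projector onto the antisymmetric subspace (with $\mathbb{1}$ the identity operator). An antisymmetric state satisfies $\rho_\mathcal{A}=P_\mathcal{A}\rho_\mathcal{A}P_\mathcal{A}$. A state is separable if it is of the form $\sum_k q_k |\alpha_k\rangle\langle\alpha_k|\otimes|\beta_k\rangle\langle\beta_k|$; $\sigma^\Gamma$ is the partial transpose. *)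

theory Defs
  imports "HOL-Analysis.Analysis"
begin

text \<open>Operators on C^d \<otimes> C^d are represented as matrices indexed by pairs
  (i,j) of a finite type 'd (the basis |i> \<otimes> |j>).\<close>

type_synonym 'd op2 = "complex ^ ('d \<times> 'd) ^ ('d \<times> 'd)"

definition tr :: "complex ^ 'n ^ 'n \<Rightarrow> complex" where
  "tr A = (\<Sum>i\<in>UNIV. A $ i $ i)"

definition smult_mat :: "complex \<Rightarrow> complex ^ 'n ^ 'm \<Rightarrow> complex ^ 'n ^ 'm" where
  "smult_mat c A = (\<chi> i j. c * A $ i $ j)"

definition hermitian :: "complex ^ 'n ^ 'n \<Rightarrow> bool" where
  "hermitian A \<longleftrightarrow> (\<forall>i j. A $ i $ j = cnj (A $ j $ i))"

definition psd :: "complex ^ 'n ^ 'n \<Rightarrow> bool" where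
  "psd A \<longleftrightarrow> hermitian A \<and>
     (\<forall>x :: complex ^ 'n. 0 \<le> Re (\<Sum>i\<in>UNIV. \<Sum>j\<in>UNIV. cnj (x $ i) * A $ i $ j * x $ j))"

definition is_state :: "complex ^ 'n ^ 'n \<Rightarrow> bool" where
  "is_state A \<longleftrightarrow> psd A \<and> tr A = 1"

definition swap_op :: "('d::finite) op2" where
  "swap_op = (\<chi> r c. if fst r = snd c \<and> snd r = fst c then 1 else 0)"

definition P_A :: "('d::finite) op2" where
  "P_A = smult_mat (1/2) (mat 1 - swap_op)"

definition antisymmetric_state :: "('d::finite) op2 \<Rightarrow> bool" where
  "antisymmetric_state \<rho> \<longleftrightarrow> is_state \<rho> \<and> \<rho> = P_A ** \<rho> ** P_A"

text \<open>Partial transpose on the second factor.\<close>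
definition partial_transpose :: "('d::finite) op2 \<Rightarrow> 'd op2" where
  "partial_transpose \<sigma> = (\<chi> r c. \<sigma> $ (fst r, snd c) $ (fst c, snd r))"

definition PPT :: "('d::finite) op2 \<Rightarrow> bool" where
  "PPT \<sigma> \<longleftrightarrow> psd (partial_transpose \<sigma>)"

definition prod_proj :: "complex ^ 'd \<Rightarrow> complex ^ 'd \<Rightarrow> ('d::finite) op2" where
  "prod_proj a b = (\<chi> r c. a $ fst r * cnj (a $ fst c) * (b $ snd r * cnj (b $ snd c)))"

definition separable :: "('d::finite) op2 \<Rightarrow> bool" where
  "separable \<sigma> \<longleftrightarrow> (\<exists>n::nat. \<exists>q :: nat \<Rightarrow> real. \<exists>\<alpha> \<beta> :: nat \<Rightarrow> complex ^ 'd.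
      (\<forall>k<n. q k \<ge> 0 \<and> norm (\<alpha> k) = 1 \<and> norm (\<beta> k) = 1) \<and> (\<Sum>k<n. q k) = 1 \<and>
      \<sigma> = (\<Sum>k<n. smult_mat (complex_of_real (q k)) (prod_proj (\<alpha> k) (\<beta> k))))"

definition entangled :: "('d::finite) op2 \<Rightarrow> bool" where
  "entangled \<sigma> \<longleftrightarrow> is_state \<sigma> \<and> \<not> separable \<sigma>"

definition ppt_feasible :: "('d::finite) op2 \<Rightarrow> 'd op2 \<Rightarrow> bool" where
  "ppt_feasible \<rho> \<sigma> \<longleftrightarrow>
     P_A ** \<sigma> ** P_A = smult_mat (tr (P_A ** \<sigma>)) \<rho> \<and>
     psd \<sigma> \<and> tr \<sigma> = 1 \<and> psd (partial_transpose \<sigma>)"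

text \<open>Optimal value p^PPT(\<rho>) (the objective Tr(P_A \<sigma>) is real on feasible \<sigma>).\<close>
definition p_PPT :: "('d::finite) op2 \<Rightarrow> real" where
  "p_PPT \<rho> = Sup {Re (tr (P_A ** \<sigma>)) | \<sigma>. ppt_feasible \<rho> \<sigma>}"

end

theory Submission
  imports Defs
begin


definition swp :: "'a \<times> 'a \<Rightarrow> 'a \<times> 'a" where "swp r = (snd r, fst r)"

lemma swp_swp[simp]: "swp (swp r) = r" by (simp add: swp_def)
lemma swp_eq_iff: "swp r = c \<longleftrightarrow> r = swp c" by (auto simp: swp_def)

lemma sum_swp: "(\<Sum>r\<in>UNIV. f (swp r)) = (\<Sum>r\<in>(UNIV::('d::finite \<times> 'd) set). f r)"
proof -
  have "inj swp" by (metis injI swp_swp)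
  moreover have "swp ` UNIV = (UNIV::('d \<times> 'd) set)" by (metis surjI swp_swp)
  show ?thesis by (rule sum.reindex_bij_witness[of _ swp swp]) auto
qed

lemma swap_entry: "(swap_op :: ('d::finite) op2) $ r $ k = (if k = swp r then 1 else 0)"
proof -
  obtain a b where r: "r = (a, b)" by fastforce
  obtain c d where k: "k = (c, d)" by fastforce
  show ?thesis unfolding swap_op_def swp_def r k by auto
qed

lemma PA_entry: "(P_A :: ('d::finite) op2) $ r $ k = (if k = r then 1/2 else 0) - (if k = swp r then 1/2 else 0)"
  unfolding P_A_def smult_mat_def by (auto simp: swap_entry mat_def)

lemma PA_left: "((P_A :: ('d::finite) op2) ** X) $ r $ c = (X $ r $ c - X $ swp r $ c)/2"
proof -
  have "(P_A ** X) $ r $ c = (\<Sum>k\<in>UNIV. (if k = r then X$k$c/2 else 0) - (if k = swp r then X$k$c/2 else 0))"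
    unfolding matrix_matrix_mult_def PA_entry by (auto intro!: sum.cong simp: left_diff_distrib)
  also have "\<dots> = (X $ r $ c - X $ swp r $ c)/2"
    by (simp add: sum_subtractf diff_divide_distrib)
  finally show ?thesis .
qed

lemma PA_right: "(X ** (P_A :: ('d::finite) op2)) $ r $ c = (X $ r $ c - X $ r $ swp c)/2"
proof -
  have e: "\<And>k. P_A $ k $ c = (if k = c then 1/2 else 0) - (if k = swp c then (1/2::complex) else 0)"
    by (auto simp: PA_entry swp_eq_iff)
  have "(X ** P_A) $ r $ c = (\<Sum>k\<in>UNIV. (if k = c then X$r$k/2 else 0) - (if k = swp c then X$r$k/2 else 0))"
  proof -
    have "(X ** P_A) $ r $ c = (\<Sum>k\<in>UNIV. X$r$k * P_A$k$c)" by (simp add: matrix_matrix_mult_def)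
    also have "\<dots> = (\<Sum>k\<in>UNIV. (if k = c then X$r$k/2 else 0) - (if k = swp c then X$r$k/2 else 0))"
      by (rule sum.cong) (auto simp: e right_diff_distrib)
    finally show ?thesis .
  qed
  also have "\<dots> = (X $ r $ c - X $ r $ swp c)/2"
    by (simp add: sum_subtractf diff_divide_distrib)
  finally show ?thesis .
qed

lemma aux4: fixes a b c d :: complex shows "((a-b)/2 - (c-d)/2)/2 = (a-b-c+d)/4"
  by (simp add: field_simps)

lemma PAXPA: "((P_A :: ('d::finite) op2) ** X ** P_A) $ r $ c = (X $ r $ c - X $ swp r $ c - X $ r $ swp c + X $ swp r $ swp c)/4"
proof -
  have "((P_A :: ('d::finite) op2) ** X ** P_A) $ r $ c = ((X $ r $ c - X $ swp r $ c)/2 - (X $ r $ swp c - X $ swp r $ swp c)/2)/2"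
    by (simp only: PA_right PA_left)
  then show ?thesis by (simp only: aux4)
qed

lemma tr_PA: "tr ((P_A :: ('d::finite) op2) ** X) = (\<Sum>r\<in>UNIV. (X $ r $ r - X $ swp r $ r)/2)"
  by (simp add: tr_def PA_left)



definition qf :: "complex ^ 'n ^ 'n \<Rightarrow> complex ^ 'n \<Rightarrow> complex" where
  "qf A x = (\<Sum>i\<in>UNIV. \<Sum>j\<in>UNIV. cnj (x $ i) * A $ i $ j * x $ j)"

lemma psd_iff: "psd A \<longleftrightarrow> hermitian A \<and> (\<forall>x. 0 \<le> Re (qf A x))"
  by (simp add: psd_def qf_def)

lemma outer_psd:
  fixes w :: "'k \<Rightarrow> ('n::finite) \<Rightarrow> complex"
  assumes "finite K" "\<And>k. k \<in> K \<Longrightarrow> q k \<ge> 0"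
  shows "psd ((\<chi> r c. \<Sum>k\<in>K. complex_of_real (q k) * (w k r * cnj (w k c))) :: complex ^ 'n ^ 'n)"
proof -
  let ?A = "(\<chi> r c. \<Sum>k\<in>K. complex_of_real (q k) * (w k r * cnj (w k c))) :: complex ^ 'n ^ 'n"
  have h: "hermitian ?A" unfolding hermitian_def by (simp add: mult.commute)
  have "Re (qf ?A x) \<ge> 0" for x
  proof -
    define s where "s k = (\<Sum>i\<in>UNIV. cnj (x $ i) * w k i)" for k
    define t where "t k i j = complex_of_real (q k) * ((cnj (x $ i) * w k i) * (x $ j * cnj (w k j)))" for k i j
    have "qf ?A x = (\<Sum>i\<in>UNIV. \<Sum>j\<in>UNIV. \<Sum>k\<in>K. t k i j)"
      unfolding qf_def t_def by (simp add: sum_distrib_left sum_distrib_right mult_ac)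
    also have "\<dots> = (\<Sum>i\<in>UNIV. \<Sum>k\<in>K. \<Sum>j\<in>UNIV. t k i j)"
      by (rule sum.cong[OF refl], rule sum.swap)
    also have "\<dots> = (\<Sum>k\<in>K. \<Sum>i\<in>UNIV. \<Sum>j\<in>UNIV. t k i j)"
      by (rule sum.swap)
    also have "\<dots> = (\<Sum>k\<in>K. complex_of_real (q k) * (s k * cnj (s k)))"
    proof (rule sum.cong[OF refl])
      fix k
      have c: "cnj (s k) = (\<Sum>j\<in>UNIV. x $ j * cnj (w k j))" unfolding s_def by simp
      have "s k * cnj (s k) = (\<Sum>i\<in>UNIV. \<Sum>j\<in>UNIV. (cnj (x $ i) * w k i) * (x $ j * cnj (w k j)))"
        unfolding c unfolding s_def by (rule sum_product)
      then show "(\<Sum>i\<in>UNIV. \<Sum>j\<in>UNIV. t k i j) = complex_of_real (q k) * (s k * cnj (s k))"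
        unfolding t_def by (simp only: sum_distrib_left)
    qed
    also have "\<dots> = complex_of_real (\<Sum>k\<in>K. q k * (cmod (s k))^2)"
    proof -
      have "s k * cnj (s k) = complex_of_real ((cmod (s k))^2)" for k
        by (metis complex_norm_square of_real_power)
      then show ?thesis by simp
    qed
    finally show ?thesis using assms by (simp add: sum_nonneg)
  qed
  then show ?thesis using h psd_iff by blast
qed
lemma qf_add: "qf (A + B) x = qf A x + qf B x"
  by (simp add: qf_def distrib_left distrib_right sum.distrib)

lemma qf_smult: "qf (smult_mat a A) x = a * qf A x"
  by (simp add: qf_def smult_mat_def sum_distrib_left mult_ac)

lemma psd_add: assumes "psd A" "psd B" shows "psd (A + B)"
proof -
  have "hermitian (A + B)" unfolding hermitian_def
  proof (intro allI)
    fix i j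
    have "A $ i $ j = cnj (A $ j $ i)" "B $ i $ j = cnj (B $ j $ i)"
      using assms unfolding psd_iff hermitian_def by blast+
    then show "(A + B) $ i $ j = cnj ((A + B) $ j $ i)" by simp
  qed
  moreover have "0 \<le> Re (qf (A + B) x)" for x using assms unfolding psd_iff qf_add
    by simp
  ultimately show ?thesis unfolding psd_iff by blast
qed

lemma psd_smult: assumes "psd A" "c \<ge> 0" shows "psd (smult_mat (complex_of_real c) A)"
proof -
  have "hermitian (smult_mat (complex_of_real c) A)" unfolding hermitian_def
  proof (intro allI)
    fix i j
    have "A $ i $ j = cnj (A $ j $ i)"
      using assms unfolding psd_iff hermitian_def by blast
    then show "smult_mat (complex_of_real c) A $ i $ j = cnj (smult_mat (complex_of_real c) A $ j $ i)"
      by (simp add: smult_mat_def)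
  qed
  moreover have "0 \<le> Re (qf (smult_mat (complex_of_real c) A) x)" for x using assms unfolding psd_iff qf_smult
    by simp
  ultimately show ?thesis unfolding psd_iff by blast
qed

lemma PT_add: "partial_transpose (A + B) = partial_transpose A + partial_transpose B"
  by (simp add: partial_transpose_def vec_eq_iff)

lemma PT_smult: "partial_transpose (smult_mat a A) = smult_mat a (partial_transpose A)"
  by (simp add: partial_transpose_def smult_mat_def vec_eq_iff)

lemma psd_diag: assumes "psd X" shows "Re (X $ r $ r) \<ge> 0 \<and> X $ r $ r = complex_of_real (Re (X $ r $ r))"
proof -
  define x where "x = (\<chi> k. if k = r then 1 else (0::complex))"
  have m1: "\<And>a P. a * (if P then 1 else 0) = (if P then a else (0::complex))" by simp
  have m2: "\<And>a P. (if P then 1 else 0) * a = (if P then a else (0::complex))" by simp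
  have m3: "\<And>P. cnj (if P then 1 else 0) = (if P then 1 else (0::complex))" by simp
  have "qf X x = X $ r $ r" unfolding qf_def x_def vec_lambda_beta m3 m2 m1 by simp
  moreover have "X $ r $ r = cnj (X $ r $ r)" using assms unfolding psd_def hermitian_def by blast
  then have "Im (X $ r $ r) = Im (cnj (X $ r $ r))" by (rule arg_cong)
  then have "Im (X $ r $ r) = 0" by simp
  then have "X $ r $ r = complex_of_real (Re (X $ r $ r))" by (simp add: complex_eq_iff)
  moreover have "Re (X $ r $ r) \<ge> 0" using assms \<open>qf X x = X $ r $ r\<close> unfolding psd_iff by metis
  ultimately show ?thesis by blast
qed

lemma psd_tr: assumes "psd X" shows "Re (tr X) \<ge> 0 \<and> tr X = complex_of_real (Re (tr X))"
proof -
  have "tr X = (\<Sum>r\<in>UNIV. complex_of_real (Re (X $ r $ r)))"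
    unfolding tr_def by (rule sum.cong[OF refl]) (use psd_diag[OF assms] in blast)
  then show ?thesis using psd_diag[OF assms] by (simp add: sum_nonneg)
qed

lemma Re_cnj_mult_ge: "Re (cnj a * b) \<ge> - cmod a * cmod b"
proof -
  have "\<bar>Re (cnj a * b)\<bar> \<le> cmod (cnj a * b)" by (rule abs_Re_le_cmod)
  then show ?thesis by (simp add: norm_mult)
qed

lemma qf_lower:
  fixes A :: "complex ^ ('n::finite) ^ 'n"
  shows "Re (qf A x) \<ge> - (\<Sum>i\<in>UNIV. \<Sum>j\<in>UNIV. cmod (A $ i $ j)) * (\<Sum>i\<in>UNIV. (cmod (x $ i))^2)"
proof -
  define N where "N = (\<Sum>i\<in>UNIV. (cmod (x $ i))^2)"
  have xb: "cmod (x $ i) * cmod (x $ j) \<le> N" for i j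
  proof -
    have "(cmod (x $ i))^2 \<le> N" "(cmod (x $ j))^2 \<le> N" unfolding N_def
      by (auto intro!: member_le_sum)
    moreover have "2 * (cmod (x $ i) * cmod (x $ j)) \<le> (cmod (x $ i))^2 + (cmod (x $ j))^2"
      using sum_squares_bound[of "cmod (x $ i)" "cmod (x $ j)"] by (simp add: power2_eq_square)
    ultimately show ?thesis by linarith
  qed
  have "Re (cnj (x $ i) * A $ i $ j * x $ j) \<ge> - (cmod (A $ i $ j) * N)" for i j
  proof -
    have "Re (cnj (x $ i) * (A $ i $ j * x $ j)) \<ge> - cmod (x $ i) * cmod (A $ i $ j * x $ j)"
      by (rule Re_cnj_mult_ge)
    moreover have "cmod (x $ i) * cmod (A $ i $ j * x $ j) = cmod (A $ i $ j) * (cmod (x $ i) * cmod (x $ j))"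
      by (simp add: norm_mult)
    moreover have "cmod (A $ i $ j) * (cmod (x $ i) * cmod (x $ j)) \<le> cmod (A $ i $ j) * N"
      using xb by (simp add: mult_left_mono)
    ultimately show ?thesis by (simp add: mult.assoc)
  qed
  then have "Re (qf A x) \<ge> (\<Sum>i\<in>UNIV. \<Sum>j\<in>UNIV. - (cmod (A $ i $ j) * N))"
    unfolding qf_def by (simp add: sum_mono)
  then show ?thesis unfolding N_def[symmetric] by (simp add: sum_distrib_right sum_negf)
qed


lemma aux_trY: fixes a b c d :: complex shows "((a - b - c + d)/4 - (b - a - d + c)/4)/2 = (a-b-c+d)/4"
  by (simp add: field_simps)

lemma tr_PA_PAXPA: "tr ((P_A :: ('d::finite) op2) ** (P_A ** X ** P_A)) = tr (P_A ** X)"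
proof -
  have "tr (P_A ** (P_A ** X ** P_A)) = (\<Sum>r\<in>UNIV. (X $ r $ r - X $ swp r $ r - X $ r $ swp r + X $ swp r $ swp r)/4)"
    unfolding tr_PA PAXPA swp_swp aux_trY by simp
  also have "\<dots> = ((\<Sum>r\<in>UNIV. X $ r $ r) - (\<Sum>r\<in>UNIV. X $ swp r $ r) - (\<Sum>r\<in>UNIV. X $ r $ swp r) + (\<Sum>r\<in>UNIV. X $ swp r $ swp r))/4"
    by (simp add: sum_subtractf sum.distrib sum_divide_distrib[symmetric])
  also have "(\<Sum>r\<in>UNIV. X $ r $ swp r) = (\<Sum>r\<in>UNIV. X $ swp r $ r)"
    using sum_swp[of "\<lambda>r. X $ swp r $ r"] by simp
  also have "(\<Sum>r\<in>UNIV. X $ swp r $ swp r) = (\<Sum>r\<in>UNIV. X $ r $ r)"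
    using sum_swp[of "\<lambda>r. X $ r $ r"] by simp
  also have "((\<Sum>r\<in>UNIV. X $ r $ r) - (\<Sum>r\<in>UNIV. X $ swp r $ r) - (\<Sum>r\<in>UNIV. X $ swp r $ r) + (\<Sum>r\<in>UNIV. X $ r $ r))/4
     = (\<Sum>r\<in>UNIV. (X $ r $ r - X $ swp r $ r)/2)"
    by (simp add: sum_subtractf sum_divide_distrib[symmetric] field_simps)
  finally show ?thesis by (simp add: tr_PA)
qed

lemma aux_ineq: fixes a b s :: real shows "- (a + b)/2 \<le> s \<Longrightarrow> (a - s)/2 \<le> (a + (a + b)/2)/2"
  by (simp add: field_simps)

lemma value_le_1:
  assumes "psd (\<sigma> :: ('d::finite) op2)" "tr \<sigma> = 1"
  shows "Re (tr (P_A ** \<sigma>)) \<le> 1"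
proof -
  have herm: "\<sigma> $ i $ j = cnj (\<sigma> $ j $ i)" for i j using assms unfolding psd_def hermitian_def by blast
  have key: "Re (\<sigma> $ swp r $ r) \<ge> - (Re (\<sigma> $ r $ r) + Re (\<sigma> $ swp r $ swp r))/2" for r
  proof -
    define x where "x = (\<chi> k. (if k = r then 1 else 0) + (if k = swp r then 1 else (0::complex)))"
    have m1: "\<And>a P. a * (if P then 1 else 0) = (if P then a else (0::complex))" by simp
    have m2: "\<And>a P. (if P then 1 else 0) * a = (if P then a else (0::complex))" by simp
    have m3: "\<And>P Q. cnj ((if P then 1 else 0) + (if Q then 1 else 0)) = (if P then 1 else 0) + (if Q then 1 else (0::complex))" by simp
    have "qf \<sigma> x = \<sigma> $ r $ r + \<sigma> $ r $ swp r + \<sigma> $ swp r $ r + \<sigma> $ swp r $ swp r"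
      unfolding qf_def x_def vec_lambda_beta m3 distrib_left distrib_right m1 m2
      by (simp add: sum.distrib)
    moreover have "Re (qf \<sigma> x) \<ge> 0" using assms(1) unfolding psd_iff by blast
    moreover have "Re (\<sigma> $ r $ swp r) = Re (\<sigma> $ swp r $ r)" using herm[of r "swp r"] by simp
    ultimately show ?thesis by simp
  qed
  have "Re (tr (P_A ** \<sigma>)) = (\<Sum>r\<in>UNIV. (Re (\<sigma> $ r $ r) - Re (\<sigma> $ swp r $ r))/2)"
    by (simp add: tr_PA)
  also have "\<dots> \<le> (\<Sum>r\<in>UNIV. (Re (\<sigma> $ r $ r) + (Re (\<sigma> $ r $ r) + Re (\<sigma> $ swp r $ swp r))/2)/2)"
  proof (rule sum_mono)
    fix r :: "'d \<times> 'd"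
    show "(Re (\<sigma> $ r $ r) - Re (\<sigma> $ swp r $ r))/2 \<le> (Re (\<sigma> $ r $ r) + (Re (\<sigma> $ r $ r) + Re (\<sigma> $ swp r $ swp r))/2)/2"
      using key[of r] aux_ineq by blast
  qed
  also have "\<dots> = (3 * (\<Sum>r\<in>UNIV. Re (\<sigma> $ r $ r)) + (\<Sum>r\<in>UNIV. Re (\<sigma> $ swp r $ swp r)))/4"
    by (simp add: sum.distrib sum_divide_distrib[symmetric] sum_distrib_left[symmetric] field_simps)
  also have "(\<Sum>r\<in>UNIV. Re (\<sigma> $ swp r $ swp r)) = (\<Sum>r\<in>UNIV. Re (\<sigma> $ r $ r))"
    using sum_swp[of "\<lambda>r. Re (\<sigma> $ r $ r)"] by simp
  also have "(\<Sum>r\<in>UNIV. Re (\<sigma> $ r $ r)) = Re (tr \<sigma>)" by (simp add: tr_def)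
  finally show ?thesis using assms(2) by simp
qed

lemma p_ge:
  assumes "ppt_feasible \<rho> (\<sigma> :: ('d::finite) op2)"
  shows "Re (tr (P_A ** \<sigma>)) \<le> p_PPT \<rho>"
  unfolding p_PPT_def
proof (rule cSup_upper)
  show "Re (tr (P_A ** \<sigma>)) \<in> {Re (tr (P_A ** \<sigma>)) |\<sigma>. ppt_feasible \<rho> \<sigma>}" using assms by blast
  show "bdd_above {Re (tr (P_A ** \<sigma>)) |\<sigma>. ppt_feasible \<rho> (\<sigma> :: ('d::finite) op2)}"
    unfolding bdd_above_def using value_le_1 unfolding ppt_feasible_def by blast
qed



lemma tr_add: "tr (A + B) = tr A + tr B" by (simp add: tr_def sum.distrib)
lemma tr_smult: "tr (smult_mat a A) = a * tr A" by (simp add: tr_def smult_mat_def sum_distrib_left)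

lemma aux8: fixes a b c d a' b' c' d' :: complex
  shows "((a+a') - (b+b') - (c+c') + (d+d'))/4 = (a-b-c+d)/4 + (a'-b'-c'+d')/4"
  by (simp add: field_simps)
lemma aux8s: fixes a b c d k :: complex
  shows "(k*a - k*b - k*c + k*d)/4 = k * ((a-b-c+d)/4)"
  by (simp add: field_simps)
lemma aux4a: fixes a b a' b' :: complex
  shows "((a+a') - (b+b'))/2 = (a-b)/2 + (a'-b')/2"
  by (simp add: field_simps)
lemma aux4s: fixes a b k :: complex
  shows "(k*a - k*b)/2 = k * ((a-b)/2)"
  by (simp add: field_simps)
lemma aux_neg: fixes a b c d :: complex shows "(b - a - d + c)/4 = - ((a - b - c + d)/4)"
  by (simp add: field_simps)

lemma PAXPA_add: "(P_A :: ('d::finite) op2) ** (A + B) ** P_A = P_A ** A ** P_A + P_A ** B ** P_A"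
  unfolding vec_eq_iff by (simp only: PAXPA vector_add_component aux8 simp_thms)

lemma PAXPA_smult: "(P_A :: ('d::finite) op2) ** (smult_mat a A) ** P_A = smult_mat a (P_A ** A ** P_A)"
  unfolding vec_eq_iff smult_mat_def by (simp only: PAXPA vec_lambda_beta aux8s simp_thms)

lemma trPA_add: "tr ((P_A :: ('d::finite) op2) ** (A + B)) = tr (P_A ** A) + tr (P_A ** B)"
  by (simp only: tr_PA vector_add_component aux4a sum.distrib)

lemma trPA_smult: "tr ((P_A :: ('d::finite) op2) ** (smult_mat a A)) = a * tr (P_A ** A)"
  unfolding smult_mat_def by (simp only: tr_PA vec_lambda_beta aux4s sum_distrib_left)

lemma trPA_of_anti: assumes "Y = (P_A :: ('d::finite) op2) ** X ** P_A" shows "tr (P_A ** Y) = tr Y"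
proof -
  have h: "Y $ swp r $ r = - Y $ r $ r" for r
    unfolding assms PAXPA swp_swp by (rule aux_neg)
  have "tr (P_A ** Y) = (\<Sum>r\<in>UNIV. (Y $ r $ r - Y $ swp r $ r)/2)" by (rule tr_PA)
  also have "\<dots> = (\<Sum>r\<in>UNIV. Y $ r $ r)" by (simp add: h)
  finally show ?thesis by (simp add: tr_def)
qed

lemma sum_swp_delta: "(\<Sum>j\<in>UNIV. if i = swp j then f j else 0) = f (swp (i::'d::finite \<times> 'd))"
proof -
  have "(\<Sum>j\<in>UNIV. if i = swp j then f j else 0) = (\<Sum>j\<in>UNIV. if j = swp i then f j else 0)"
    by (rule sum.cong[OF refl]) (metis swp_swp)
  also have "\<dots> = f (swp i)" by simp
  finally show ?thesis .
qed

lemma herm_PT: assumes "hermitian (X :: ('d::finite) op2)" shows "hermitian (partial_transpose X)"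
  unfolding hermitian_def partial_transpose_def vec_lambda_beta
  using assms unfolding hermitian_def by blast



definition Ssym :: "('d::finite) op2" where
  "Ssym = (\<chi> r c. (if r = c then 1 else 0) + (if r = swp c then 1 else 0))"

lemma Ssym_entry: "Ssym $ r $ c = (if r = c then 1 else 0) + (if r = swp c then 1 else 0)"
  by (simp add: Ssym_def)

lemma aux_half: fixes p q u r :: real shows "2 * (p * q) \<le> u \<Longrightarrow> - p * q \<le> r \<Longrightarrow> - u / 2 \<le> r"
  by (simp add: field_simps)

lemma psd_Ssym: "psd (Ssym :: ('d::finite) op2)"
proof -
  have "hermitian (Ssym :: ('d::finite) op2)" unfolding hermitian_def Ssym_entry
  proof (intro allI)
    fix i j :: "'d \<times> 'd"
    have "(i = swp j) = (j = swp i)" by (metis swp_swp)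
    then show "(if i = j then 1 else 0) + (if i = swp j then 1 else 0) = cnj ((if j = i then 1 else 0) + (if j = swp i then 1 else (0::complex)))"
      by auto
  qed
  moreover have "0 \<le> Re (qf (Ssym :: ('d::finite) op2) x)" for x
  proof -
    define N where "N = (\<Sum>i\<in>UNIV. (cmod (x $ i))^2)"
    have m1: "\<And>a P. a * (if P then 1 else 0) = (if P then a else (0::complex))" by simp
    have qfS: "qf Ssym x = (\<Sum>i\<in>UNIV. cnj (x $ i) * x $ i) + (\<Sum>i\<in>UNIV. cnj (x $ i) * x $ swp i)"
    proof -
      have m2: "\<And>a b P. (if P then a else 0) * b = (if P then a * b else (0::complex))" by simp
      show ?thesis
      unfolding qf_def Ssym_entry distrib_left distrib_right m1 m2 sum.distrib sum_swp_delta
      by simp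
    qed
    have ReA: "Re (\<Sum>i\<in>UNIV. cnj (x $ i) * x $ i) = N"
    proof -
      have "cnj (x $ i) * x $ i = complex_of_real ((cmod (x $ i))^2)" for i
        by (metis complex_norm_square mult.commute of_real_power)
      then show ?thesis unfolding N_def by simp
    qed
    have ReB: "Re (\<Sum>i\<in>UNIV. cnj (x $ i) * x $ swp i) \<ge> - N"
    proof -
      define A where "A i = (cmod (x $ i))^2" for i
      have pw: "- (A i + A (swp i))/2 \<le> Re (cnj (x $ i) * x $ swp i)" for i
      proof -
        have "2 * (cmod (x $ i) * cmod (x $ swp i)) \<le> A i + A (swp i)"
          unfolding A_def using sum_squares_bound[of "cmod (x $ i)" "cmod (x $ swp i)"] by (simp add: power2_eq_square)
        then show ?thesis using Re_cnj_mult_ge[of "x $ i" "x $ swp i"] aux_half by blast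
      qed
      have "- N = (\<Sum>i\<in>UNIV. - (A i + A (swp i))/2)"
      proof -
        have s1: "(\<Sum>i\<in>UNIV. A (swp i)) = N" unfolding N_def A_def by (rule sum_swp)
        have "(\<Sum>i\<in>UNIV. - (A i + A (swp i))/2) = - ((\<Sum>i\<in>UNIV. A i) + (\<Sum>i\<in>UNIV. A (swp i)))/2"
          by (simp only: sum_negf sum.distrib sum_divide_distrib[symmetric] minus_divide_left[symmetric])
        then show ?thesis using s1 unfolding N_def A_def by simp
      qed
      also have "\<dots> \<le> (\<Sum>i\<in>UNIV. Re (cnj (x $ i) * x $ swp i))"
        by (rule sum_mono) (rule pw)
      also have "\<dots> = Re (\<Sum>i\<in>UNIV. cnj (x $ i) * x $ swp i)" by simp
      finally show ?thesis by simp
    qed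
    have "Re (qf Ssym x) = Re (\<Sum>i\<in>UNIV. cnj (x $ i) * x $ i) + Re (\<Sum>i\<in>UNIV. cnj (x $ i) * x $ swp i)"
      unfolding qfS by (rule plus_complex.sel)
    then show ?thesis using ReA ReB by linarith
  qed
  ultimately show ?thesis unfolding psd_iff by blast
qed



lemma S_swp1: "Ssym $ swp r $ c = Ssym $ r $ c"
proof -
  have "(swp r = c) = (r = swp c)" "(swp r = swp c) = (r = c)" by (metis swp_swp)+
  then show ?thesis unfolding Ssym_entry by simp
qed

lemma S_swp2: "Ssym $ r $ swp c = Ssym $ r $ c"
proof -
  have "(r = swp c) = (r = swp c)" "(r = swp (swp c)) = (r = c)" by (metis swp_swp)+
  then show ?thesis unfolding Ssym_entry by (simp add: add.commute)
qed

lemma PASPA: "(P_A :: ('d::finite) op2) ** Ssym ** P_A = 0"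
  unfolding vec_eq_iff PAXPA S_swp1 S_swp2 by simp

lemma trPAS: "tr ((P_A :: ('d::finite) op2) ** Ssym) = 0"
  unfolding tr_PA S_swp1 by simp

lemma PT_S_entry: "partial_transpose (Ssym :: ('d::finite) op2) $ r $ c = (if r = c then 1 else 0) + (if fst r = snd r \<and> fst c = snd c then 1 else 0)"
proof -
  obtain a b where r: "r = (a, b)" by fastforce
  obtain e f where c: "c = (e, f)" by fastforce
  show ?thesis unfolding partial_transpose_def Ssym_entry r c swp_def by auto
qed

lemma qf_PT_S: "Re (qf (partial_transpose (Ssym :: ('d::finite) op2)) x) \<ge> (\<Sum>i\<in>UNIV. (cmod (x $ i))^2)"
proof -
  define D where "D i = (fst i = snd i)" for i :: "'d \<times> 'd"
  define s where "s = (\<Sum>j\<in>UNIV. if D j then x $ j else 0)"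
  have m1: "\<And>a P. a * (if P then 1 else 0) = (if P then a else (0::complex))" by simp
  have m2: "\<And>a b P. (if P then a else 0) * b = (if P then a * b else (0::complex))" by simp
  have m3: "\<And>a P. cnj (if P then a else 0) = (if P then cnj a else (0::complex))" by simp
  have "qf (partial_transpose Ssym) x = (\<Sum>i\<in>UNIV. cnj (x $ i) * x $ i) + (\<Sum>i\<in>UNIV. \<Sum>j\<in>UNIV. if D i \<and> D j then cnj (x $ i) * x $ j else 0)"
    unfolding qf_def PT_S_entry D_def[symmetric] distrib_left distrib_right m1 m2 sum.distrib by simp
  also have "(\<Sum>i\<in>UNIV. \<Sum>j\<in>UNIV. if D i \<and> D j then cnj (x $ i) * x $ j else 0) = cnj s * s"
  proof -
    have "cnj s * s = (\<Sum>i\<in>UNIV. \<Sum>j\<in>UNIV. (if D i then cnj (x $ i) else 0) * (if D j then x $ j else 0))"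
      unfolding s_def cnj_sum m3 by (rule sum_product)
    moreover have "\<And>a b P Q. (if P then a else 0) * (if Q then b else 0) = (if P \<and> Q then a * b else (0::complex))" by simp
    ultimately show ?thesis by simp
  qed
  also have "cnj s * s = complex_of_real ((cmod s)^2)" by (metis complex_norm_square mult.commute of_real_power)
  also have "(\<Sum>i\<in>UNIV. cnj (x $ i) * x $ i) = complex_of_real (\<Sum>i\<in>UNIV. (cmod (x $ i))^2)"
  proof -
    have "cnj (x $ i) * x $ i = complex_of_real ((cmod (x $ i))^2)" for i
      by (metis complex_norm_square mult.commute of_real_power)
    then show ?thesis by simp
  qed
  finally show ?thesis by simp
qed



lemma psd_herm: "psd A \<Longrightarrow> hermitian A" by (simp add: psd_def)

lemma p_pos:
  assumes "antisymmetric_state (\<rho> :: ('d::finite) op2)"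
  shows "p_PPT \<rho> > 0"
proof -
  have rs: "psd \<rho>" and rt: "tr \<rho> = 1" and rA: "\<rho> = P_A ** \<rho> ** P_A"
    using assms unfolding antisymmetric_state_def is_state_def by auto
  define K where "K = (\<Sum>r\<in>UNIV. \<Sum>c\<in>UNIV. cmod (partial_transpose \<rho> $ r $ c))"
  have K0: "K \<ge> 0" unfolding K_def by (simp add: sum_nonneg)
  define \<sigma>0 where "\<sigma>0 = \<rho> + smult_mat (complex_of_real K) Ssym"
  have ps0: "psd \<sigma>0" unfolding \<sigma>0_def by (rule psd_add[OF rs psd_smult[OF psd_Ssym K0]])
  have PT0: "partial_transpose \<sigma>0 = partial_transpose \<rho> + smult_mat (complex_of_real K) (partial_transpose Ssym)"
    unfolding \<sigma>0_def PT_add PT_smult ..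
  have ppt0: "psd (partial_transpose \<sigma>0)"
  proof -
    have "hermitian (partial_transpose \<sigma>0)" by (rule herm_PT[OF psd_herm[OF ps0]])
    moreover have "0 \<le> Re (qf (partial_transpose \<sigma>0) x)" for x
    proof -
      define N where "N = (\<Sum>i\<in>UNIV. (cmod (x $ i))^2)"
      have "Re (qf (partial_transpose \<sigma>0) x) = Re (qf (partial_transpose \<rho>) x) + K * Re (qf (partial_transpose Ssym) x)"
        unfolding PT0 qf_add qf_smult by simp
      moreover have "Re (qf (partial_transpose \<rho>) x) \<ge> - K * N"
        unfolding K_def N_def by (rule qf_lower)
      moreover have "K * Re (qf (partial_transpose Ssym) x) \<ge> K * N"
        unfolding N_def using qf_PT_S K0 by (rule mult_left_mono)
      ultimately show ?thesis by linarith
    qed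
    ultimately show ?thesis unfolding psd_iff by blast
  qed
  define \<tau> where "\<tau> = Re (tr \<sigma>0)"
  have tr0: "tr \<sigma>0 = complex_of_real \<tau>" unfolding \<tau>_def using psd_tr[OF ps0] by simp
  have "\<tau> = 1 + K * Re (tr (Ssym :: ('d::finite) op2))"
    unfolding \<tau>_def \<sigma>0_def tr_add tr_smult rt by simp
  moreover have "Re (tr (Ssym :: ('d::finite) op2)) \<ge> 0" using psd_tr[OF psd_Ssym] by blast
  ultimately have tau1: "\<tau> \<ge> 1" using K0 by simp
  define \<sigma>1 where "\<sigma>1 = smult_mat (complex_of_real (1/\<tau>)) \<sigma>0"
  have ps1: "psd \<sigma>1" unfolding \<sigma>1_def by (rule psd_smult[OF ps0]) (use tau1 in simp)
  have ppt1: "psd (partial_transpose \<sigma>1)" unfolding \<sigma>1_def PT_smult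
    by (rule psd_smult[OF ppt0]) (use tau1 in simp)
  have tr1: "tr \<sigma>1 = 1" unfolding \<sigma>1_def tr_smult tr0 using tau1
    by (metis divide_self_if of_real_1 of_real_mult one_neq_zero order_less_le_trans zero_less_one not_le times_divide_eq_left mult_1)
  have trPAr: "tr (P_A ** \<rho>) = 1" using trPA_of_anti[OF rA] rt by simp
  have trPA1: "tr (P_A ** \<sigma>1) = complex_of_real (1/\<tau>)"
    unfolding \<sigma>1_def \<sigma>0_def trPA_smult trPA_add trPAS trPAr by simp
  have PAPA1: "P_A ** \<sigma>1 ** P_A = smult_mat (tr (P_A ** \<sigma>1)) \<rho>"
    unfolding trPA1 unfolding \<sigma>1_def \<sigma>0_def PAXPA_smult PAXPA_add PASPA rA[symmetric]
    by (simp add: smult_mat_def vec_eq_iff)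
  have "ppt_feasible \<rho> \<sigma>1" unfolding ppt_feasible_def using PAPA1 ps1 tr1 ppt1 by blast
  then have "Re (tr (P_A ** \<sigma>1)) \<le> p_PPT \<rho>" by (rule p_ge)
  moreover have "Re (tr (P_A ** \<sigma>1)) > 0" unfolding trPA1 using tau1 by simp
  ultimately show ?thesis by linarith
qed



lemma sum_pairs: "(\<Sum>r\<in>(UNIV :: ('a::finite \<times> 'b::finite) set). f r) = (\<Sum>a\<in>UNIV. \<Sum>b\<in>UNIV. f (a, b))"
proof -
  have "(\<Sum>a\<in>UNIV. \<Sum>b\<in>UNIV. f (a, b)) = (\<Sum>(a,b)\<in>UNIV \<times> UNIV. f (a, b))"
    by (rule sum.cartesian_product)
  then show ?thesis by simp
qed

lemma PAXPA_outer:
  fixes v :: "'k \<Rightarrow> ('d::finite \<times> 'd) \<Rightarrow> complex"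
  assumes "X = (\<chi> r c. \<Sum>k\<in>K. complex_of_real (q k) * (v k r * cnj (v k c)))"
  shows "((P_A :: 'd op2) ** X ** P_A) $ r $ c
     = (\<Sum>k\<in>K. complex_of_real (q k) * ((v k r - v k (swp r)) * cnj (v k c - v k (swp c))) / 4)"
proof -
  have e: "\<And>Q a a' b b'. Q * (a * cnj b) - Q * (a' * cnj b) - Q * (a * cnj b') + Q * (a' * cnj b')
      = Q * ((a - a') * cnj (b - b'))"
    by (simp add: algebra_simps)
  have "(P_A ** X ** P_A) $ r $ c = ((\<Sum>k\<in>K. complex_of_real (q k) * (v k r * cnj (v k c)))
      - (\<Sum>k\<in>K. complex_of_real (q k) * (v k (swp r) * cnj (v k c)))
      - (\<Sum>k\<in>K. complex_of_real (q k) * (v k r * cnj (v k (swp c))))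
      + (\<Sum>k\<in>K. complex_of_real (q k) * (v k (swp r) * cnj (v k (swp c)))))/4"
    unfolding PAXPA assms vec_lambda_beta ..
  also have "\<dots> = (\<Sum>k\<in>K. (complex_of_real (q k) * (v k r * cnj (v k c))
      - complex_of_real (q k) * (v k (swp r) * cnj (v k c))
      - complex_of_real (q k) * (v k r * cnj (v k (swp c)))
      + complex_of_real (q k) * (v k (swp r) * cnj (v k (swp c)))) / 4)"
    by (simp only: sum_subtractf[symmetric] sum.distrib[symmetric] sum_divide_distrib)
  also have "\<dots> = (\<Sum>k\<in>K. complex_of_real (q k) * ((v k r - v k (swp r)) * cnj (v k c - v k (swp c))) / 4)"
    by (simp only: e)
  finally show ?thesis .
qed

lemma norm1_sum: assumes "norm (a :: complex ^ 'd::finite) = 1" shows "(\<Sum>i\<in>UNIV. cnj (a $ i) * a $ i) = 1"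
proof -
  have "sqrt (\<Sum>i\<in>UNIV. (cmod (a $ i))^2) = 1" using assms by (simp add: norm_vec_def L2_set_def)
  then have s: "(\<Sum>i\<in>UNIV. (cmod (a $ i))^2) = 1" by simp
  have "cnj (a $ i) * a $ i = complex_of_real ((cmod (a $ i))^2)" for i
    by (metis complex_norm_square mult.commute of_real_power)
  then have "(\<Sum>i\<in>UNIV. cnj (a $ i) * a $ i) = complex_of_real (\<Sum>i\<in>UNIV. (cmod (a $ i))^2)" by simp
  then show ?thesis using s by simp
qed



lemma sep_half:
  assumes anti: "antisymmetric_state (\<rho> :: ('d::finite) op2)"
    and feas: "ppt_feasible \<rho> \<sigma>"
    and opt: "Re (tr (P_A ** \<sigma>)) = p_PPT \<rho>"
    and sep: "separable \<sigma>"
  shows "p_PPT \<rho> \<ge> 1/2"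
proof -
  obtain n q and \<alpha> \<beta> :: "nat \<Rightarrow> complex ^ 'd" where
    cond: "\<And>k. k < n \<Longrightarrow> q k \<ge> 0 \<and> norm (\<alpha> k) = 1 \<and> norm (\<beta> k) = 1"
    and sdef: "\<sigma> = (\<Sum>k<n. smult_mat (complex_of_real (q k)) (prod_proj (\<alpha> k) (\<beta> k)))"
    using sep unfolding separable_def by blast
  have pA: "P_A ** \<sigma> ** P_A = smult_mat (tr (P_A ** \<sigma>)) \<rho>"
    using feas unfolding ppt_feasible_def by blast
  define w where "w k r = \<alpha> k $ fst r * \<beta> k $ snd r" for k and r :: "'d \<times> 'd"
  have sent: "\<sigma> = (\<chi> r c. \<Sum>k\<in>{..<n}. complex_of_real (q k) * (w k r * cnj (w k c)))"
    unfolding sdef vec_eq_iff by (simp add: smult_mat_def prod_proj_def w_def mult_ac)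
  define cc where "cc k = (\<Sum>i\<in>UNIV. cnj (\<alpha> k $ i) * \<beta> k $ i)" for k
  define \<gamma> where "\<gamma> k = (\<chi> i. \<beta> k $ i - cc k * \<alpha> k $ i)" for k
  define u where "u k r = \<alpha> k $ fst r * \<gamma> k $ snd r" for k and r :: "'d \<times> 'd"
  define v where "v k r = \<alpha> k $ fst r * cnj (\<gamma> k $ snd r)" for k and r :: "'d \<times> 'd"
  define \<sigma>' :: "'d op2" where "\<sigma>' = (\<chi> r c. \<Sum>k\<in>{..<n}. complex_of_real (q k) * (u k r * cnj (u k c)))"
  have qnn: "\<And>k. k \<in> {..<n} \<Longrightarrow> q k \<ge> 0" using cond by auto
  have psd': "psd \<sigma>'" unfolding \<sigma>'_def by (rule outer_psd) (use qnn in auto)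
  have PT': "partial_transpose \<sigma>' = (\<chi> r c. \<Sum>k\<in>{..<n}. complex_of_real (q k) * (v k r * cnj (v k c)))"
    unfolding \<sigma>'_def partial_transpose_def vec_eq_iff u_def v_def by (simp add: mult_ac)
  have ppt': "psd (partial_transpose \<sigma>')" unfolding PT' by (rule outer_psd) (use qnn in auto)
  have udiff: "u k r - u k (swp r) = w k r - w k (swp r)" for k r
    unfolding u_def w_def \<gamma>_def swp_def by (simp add: algebra_simps)
  have same: "P_A ** \<sigma>' ** P_A = P_A ** \<sigma> ** P_A"
    unfolding vec_eq_iff
    using PAXPA_outer[OF \<sigma>'_def] PAXPA_outer[OF sent] udiff by simp
  have orth: "(\<Sum>r\<in>UNIV. u k (swp r) * cnj (u k r)) = 0" if "k < n" for k
  proof -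
    have a1: "(\<Sum>i\<in>UNIV. cnj (\<alpha> k $ i) * \<alpha> k $ i) = 1" using cond[OF that] norm1_sum by blast
    have g0: "(\<Sum>i\<in>UNIV. cnj (\<alpha> k $ i) * \<gamma> k $ i) = 0"
    proof -
      have "(\<Sum>i\<in>UNIV. cnj (\<alpha> k $ i) * \<gamma> k $ i) = (\<Sum>i\<in>UNIV. cnj (\<alpha> k $ i) * \<beta> k $ i) - cc k * (\<Sum>i\<in>UNIV. cnj (\<alpha> k $ i) * \<alpha> k $ i)"
        unfolding \<gamma>_def by (simp add: right_diff_distrib sum_subtractf sum_distrib_left mult_ac)
      then show ?thesis unfolding a1 cc_def[symmetric] by simp
    qed
    have "(\<Sum>r\<in>UNIV. u k (swp r) * cnj (u k r)) = (\<Sum>a\<in>UNIV. \<Sum>b\<in>UNIV. (cnj (\<alpha> k $ a) * \<gamma> k $ a) * (\<alpha> k $ b * cnj (\<gamma> k $ b)))"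
      unfolding sum_pairs u_def swp_def by (simp add: mult_ac)
    also have "\<dots> = (\<Sum>i\<in>UNIV. cnj (\<alpha> k $ i) * \<gamma> k $ i) * (\<Sum>b\<in>UNIV. \<alpha> k $ b * cnj (\<gamma> k $ b))"
      by (rule sum_product[symmetric])
    finally show ?thesis unfolding g0 by simp
  qed
  have trPA': "tr (P_A ** \<sigma>') = tr \<sigma>' / 2"
  proof -
    have "(\<Sum>r\<in>UNIV. \<sigma>' $ swp r $ r) = (\<Sum>k\<in>{..<n}. complex_of_real (q k) * (\<Sum>r\<in>UNIV. u k (swp r) * cnj (u k r)))"
      unfolding \<sigma>'_def vec_lambda_beta by (simp add: sum_distrib_left sum.swap[of _ UNIV "{..<n}"])
    also have "\<dots> = 0" using orth by simp
    finally have z: "(\<Sum>r\<in>UNIV. \<sigma>' $ swp r $ r) = 0" .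
    have "tr (P_A ** \<sigma>') = (\<Sum>r\<in>UNIV. \<sigma>' $ r $ r)/2 - (\<Sum>r\<in>UNIV. \<sigma>' $ swp r $ r)/2"
      unfolding tr_PA by (simp add: sum_subtractf diff_divide_distrib sum_divide_distrib)
    then show ?thesis unfolding z tr_def by simp
  qed
  have eqtr: "tr (P_A ** \<sigma>) = tr \<sigma>' / 2"
    using tr_PA_PAXPA[of \<sigma>] tr_PA_PAXPA[of \<sigma>'] same trPA' by simp
  define \<tau> where "\<tau> = Re (tr \<sigma>')"
  have tr': "tr \<sigma>' = complex_of_real \<tau>" unfolding \<tau>_def using psd_tr[OF psd'] by simp
  have ppos: "p_PPT \<rho> > 0" by (rule p_pos[OF anti])
  have tau: "\<tau> = 2 * p_PPT \<rho>" using opt eqtr tr' by simp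
  then have taup: "\<tau> > 0" using ppos by simp
  define \<sigma>'' where "\<sigma>'' = smult_mat (complex_of_real (1/\<tau>)) \<sigma>'"
  have ps'': "psd \<sigma>''" unfolding \<sigma>''_def by (rule psd_smult[OF psd']) (use taup in simp)
  have ppt'': "psd (partial_transpose \<sigma>'')" unfolding \<sigma>''_def PT_smult
    by (rule psd_smult[OF ppt']) (use taup in simp)
  have tr'': "tr \<sigma>'' = 1" unfolding \<sigma>''_def tr_smult tr' using taup
    by (simp add: field_simps)
  have trPA'': "tr (P_A ** \<sigma>'') = 1/2" unfolding \<sigma>''_def trPA_smult trPA' tr' using taup
    by (simp add: field_simps)
  have PAPA'': "P_A ** \<sigma>'' ** P_A = smult_mat (tr (P_A ** \<sigma>'')) \<rho>"
  proof -
    have "P_A ** \<sigma>'' ** P_A = smult_mat (complex_of_real (1/\<tau>)) (smult_mat (tr (P_A ** \<sigma>)) \<rho>)"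
      unfolding \<sigma>''_def PAXPA_smult same pA ..
    also have "\<dots> = smult_mat (1/2) \<rho>"
      unfolding eqtr tr' smult_mat_def vec_eq_iff using taup by simp
    finally show ?thesis unfolding trPA'' .
  qed
  have "ppt_feasible \<rho> \<sigma>''" unfolding ppt_feasible_def using PAPA'' ps'' tr'' ppt'' by blast
  then have "Re (tr (P_A ** \<sigma>'')) \<le> p_PPT \<rho>" by (rule p_ge)
  then show ?thesis unfolding trPA'' by simp
qed


theorem mainTheorem3:
  fixes \<rho> \<sigma> :: "('d::finite) op2"
  assumes "antisymmetric_state \<rho>"
    and "p_PPT \<rho> < 1/2"
    and "ppt_feasible \<rho> \<sigma>"
    and "Re (tr (P_A ** \<sigma>)) = p_PPT \<rho>"
  shows "entangled \<sigma> \<and> PPT \<sigma>"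
proof -
  have ns: "\<not> separable \<sigma>"
  proof
    assume "separable \<sigma>"
    then have "p_PPT \<rho> \<ge> 1/2" using sep_half assms(1,3,4) by blast
    then show False using assms(2) by linarith
  qed
  have "is_state \<sigma>" using assms(3) unfolding ppt_feasible_def is_state_def by blast
  moreover have "PPT \<sigma>" using assms(3) unfolding ppt_feasible_def PPT_def by blast
  ultimately show ?thesis using ns unfolding entangled_def by blast
qed

end
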